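(* Let $q=p^f\geq 5$ with $p$ an odd prime, and let $I=\{0,\ f/\gcd(3,f),\ 2f/\gcd(3,f)\}$. Let $b\in\mathbb{F}_{q^2}^\times$ with $b+b^q=1$ and $b\neq b^q$, and let $a\in\mathbb{F}_{q^2}^\times$ be an element of order $q-1$ such that $(a+a^{-1}+1)^{p^i}\neq a+a^{-1}b^{q+1}$ for all $i\in I$, $(a+a^{-1}+1)^{p^i}\neq 1+b^{q+1}$ for all $i\in I$, and $a+a^{-1}b^{q+1}\neq 1+b^{q+1}$. Let \[ X=\begin{pmatrix}-b^q&b&b^{q+1}\\ 1&0&b^q\\ 1&1&-b\end{pmatrix},\quad Y=\begin{pmatrix}0&0&a\\ 0&-1&0\\ a^{-1}&0&0\end{pmatrix},\quad Z=\begin{pmatrix}0&0&1\\ 0&-1&0\\ 1&0&0\end{pmatrix}. \] Then $\langle X,Y,Z\rangle$ is an irreducible subgroup of $\mathrm{SU}_3(q)$, i.e. it stabilizes no subspace of $\mathbb{F}_{q^2}^3$ of dimension $1$ or $2$.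
   Context: Here $\mathrm{SU}_3(q)=\{A\in\mathrm{SL}_3(q^2): \overline{A}^{T}WA=W\}$, where $\overline{(a_{ij})}=(a_{ij}^q)$ and $W=\begin{pmatrix}0&0&1\\0&1&0\\1&0&0\end{pmatrix}$; matrices act on row vectors in $\mathbb{F}_{q^2}^3$ by right multiplication. *)

theory Defs
  imports "HOL-Analysis.Analysis"
begin

definition frobm :: "nat \<Rightarrow> 'a::field^3^3 \<Rightarrow> 'a^3^3" where
  "frobm q A = (\<chi> i j. (A$i$j) ^ q)"

definition Wmat :: "'a::field^3^3" where
  "Wmat = vector [vector [0,0,1], vector [0,1,0], vector [1,0,0]]"

text \<open>SU_3(q) inside SL_3 of a field 'a (intended: 'a = F_{q^2}).\<close>
definition SU3 :: "nat \<Rightarrow> ('a::field^3^3) set" where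
  "SU3 q = {A. det A = 1 \<and> transpose (frobm q A) ** Wmat ** A = Wmat}"

inductive_set gen_group :: "('a::field^3^3) set \<Rightarrow> ('a^3^3) set" for S where
  one: "mat 1 \<in> gen_group S"
| gen: "g \<in> S \<Longrightarrow> g \<in> gen_group S"
| mult: "g \<in> gen_group S \<Longrightarrow> h \<in> gen_group S \<Longrightarrow> g ** h \<in> gen_group S"
| inv: "g \<in> gen_group S \<Longrightarrow> matrix_inv g \<in> gen_group S"

definition elem_order :: "'a::field \<Rightarrow> nat" where
  "elem_order x = (LEAST n. 0 < n \<and> x ^ n = 1)"

definition irreducible3 :: "('a::field^3^3) set \<Rightarrow> bool" where
  "irreducible3 G \<longleftrightarrow> (\<forall>U :: ('a^3) set. vec.subspace U \<and> vec.dim U \<in> {1,2} \<longrightarrow>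
      \<not> (\<forall>g\<in>G. \<forall>v\<in>U. v v* g \<in> U))"

end

theory Submission imports Defs "HOL-Number_Theory.Residues" begin

lemma pow_card_same:
  fixes x :: "'a :: {field,finite}"
  shows "x ^ CARD('a) = x"
proof (cases "x = 0")
  case False
  have "x * (\<Prod>y\<in>UNIV-{0}. x * y) = x * x ^ (card (UNIV :: 'a set) - 1) * \<Prod>(UNIV-{0})"
    by (simp add: prod.distrib mult_ac)
  also have "x * x ^ (card (UNIV :: 'a set) - 1) = x ^ Suc (card (UNIV :: 'a set) - 1)"
    by (subst power_Suc) auto
  also have "Suc (card (UNIV :: 'a set) - 1) = card (UNIV :: 'a set)"
    using finite_UNIV_card_ge_0[where ?'a = 'a] by simp
  also have "(\<Prod>y\<in>UNIV-{0}. x * y) = (\<Prod>y\<in>UNIV-{0}. y)"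
    by (rule prod.reindex_bij_witness[of _ "\<lambda>y. y / x" "\<lambda>y. x * y"]) (use False in auto)
  finally show ?thesis
    by simp
qed (use finite_UNIV_card_ge_0[where ?'a = 'a] in auto)

lemma char_eq:
  assumes "prime p" "CARD('a::{field,finite}) = (p ^ f) ^ 2"
  shows "CHAR('a) = p"
proof -
  have pos: "CHAR('a) > 0" by (rule finite_imp_CHAR_pos) simp
  have pr: "prime CHAR('a)" by (rule prime_CHAR_semidom[OF pos])
  have "CHAR('a) dvd p ^ (f * 2)" using CHAR_dvd_CARD[where 'a='a] assms(2) by (simp add: power_mult)
  then have "CHAR('a) dvd p" using pr prime_dvd_power by blast
  then show ?thesis using pr assms(1) primes_dvd_imp_eq by blast
qed

lemma frob_add:
  assumes "prime p" "CARD('a::{field,finite}) = (p ^ f) ^ 2"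
  shows "((x::'a) + y) ^ (p ^ f) = x ^ (p ^ f) + y ^ (p ^ f)"
proof -
  have c: "CHAR('a) = p" using char_eq assms by blast
  show ?thesis by (rule freshmans_dream') (use c assms in auto)
qed


lemma frobm_mult:
  assumes fs: "\<And>x y::'a::field. (x + y) ^ q = x ^ q + y ^ q"
  shows "frobm q (A ** B) = frobm q (A::'a^3^3) ** frobm q B"
  unfolding frobm_def matrix_matrix_mult_def
  by (simp add: vec_eq_iff sum_3 fs power_mult_distrib)

lemma frobm_one:
  assumes "q > 0"
  shows "frobm q (mat 1 :: 'a::field^3^3) = mat 1"
  using assms unfolding frobm_def mat_def by (simp add: vec_eq_iff)

lemma SU3_mult:
  assumes fs: "\<And>x y::'a::field. (x + y) ^ q = x ^ q + y ^ q"
    and A: "(A::'a^3^3) \<in> SU3 q" and B: "B \<in> SU3 q"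
  shows "A ** B \<in> SU3 q"
proof -
  have "transpose (frobm q (A ** B)) ** Wmat ** (A ** B)
     = transpose (frobm q B) ** (transpose (frobm q A) ** Wmat ** A) ** B"
    by (simp add: frobm_mult[OF fs] matrix_transpose_mul matrix_mul_assoc)
  also have "\<dots> = Wmat" using A B by (simp add: SU3_def matrix_mul_assoc)
  finally show ?thesis using A B by (simp add: SU3_def det_mul)
qed

lemma SU3_inv:
  assumes fs: "\<And>x y::'a::field. (x + y) ^ q = x ^ q + y ^ q" and q: "q > 0"
    and A: "(A::'a^3^3) \<in> SU3 q"
  shows "matrix_inv A \<in> SU3 q"
proof -
  define B where "B = matrix_inv A"
  have "invertible A" using A by (simp add: SU3_def invertible_det_nz)
  then have AB: "A ** B = mat 1" and BA: "B ** A = mat 1"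
    unfolding B_def matrix_inv_def invertible_def by (metis (mono_tags, lifting) someI_ex)+
  have "det A * det B = 1" using AB by (metis det_mul det_I)
  then have d: "det B = 1" using A by (simp add: SU3_def)
  have FF: "frobm q A ** frobm q B = mat 1"
    by (metis AB frobm_mult[OF fs] frobm_one[OF q])
  have "transpose (frobm q B) ** Wmat ** B
     = transpose (frobm q B) ** (transpose (frobm q A) ** Wmat ** A) ** B"
    using A by (simp add: SU3_def)
  also have "\<dots> = transpose (frobm q A ** frobm q B) ** Wmat ** (A ** B)"
    by (simp add: matrix_transpose_mul matrix_mul_assoc)
  also have "\<dots> = Wmat" by (simp add: FF AB transpose_mat)
  finally show ?thesis using d by (simp add: SU3_def B_def)
qed

lemma frobm_vec:
  "frobm q (vector [vector [x11, x12, x13], vector [x21, x22, x23], vector [x31, x32, x33]] :: 'a::field^3^3)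
   = vector [vector [x11^q, x12^q, x13^q], vector [x21^q, x22^q, x23^q], vector [x31^q, x32^q, x33^q]]"
  by (simp add: frobm_def vec_eq_iff forall_3)

lemma SU3_vecI:
  assumes "det M = 1" "frobm q M = N" "transpose N ** Wmat ** M = Wmat"
  shows "M \<in> SU3 q"
  using assms by (simp add: SU3_def)

lemma X_unit:
  fixes b c :: "'a::field"
  assumes "b + c = 1"
  shows "det (vector [vector [- c, b, b * c], vector [1, 0, c], vector [1, 1, - b]] :: 'a^3^3) = 1"
    and "transpose (vector [vector [- b, c, c * b], vector [1, 0, b], vector [1, 1, - c]] :: 'a^3^3) ** Wmat
          ** (vector [vector [- c, b, b * c], vector [1, 0, c], vector [1, 1, - b]]) = Wmat"
proof -
  have b: "b = 1 - c" using assms by (simp add: algebra_simps)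
  show "det (vector [vector [- c, b, b * c], vector [1, 0, c], vector [1, 1, - b]] :: 'a^3^3) = 1"
    unfolding b det_3 by (simp add: algebra_simps)
  show "transpose (vector [vector [- b, c, c * b], vector [1, 0, b], vector [1, 1, - c]] :: 'a^3^3) ** Wmat
          ** (vector [vector [- c, b, b * c], vector [1, 0, c], vector [1, 1, - b]]) = Wmat"
    unfolding b Wmat_def
    by (simp add: vec_eq_iff forall_3 sum_3 matrix_matrix_mult_def transpose_def algebra_simps)
qed

lemma Y_unit:
  fixes a :: "'a::field"
  assumes "a \<noteq> 0"
  shows "det (vector [vector [0, 0, a], vector [0, -1, 0], vector [inverse a, 0, 0]] :: 'a^3^3) = 1"
    and "transpose (vector [vector [0, 0, a], vector [0, -1, 0], vector [inverse a, 0, 0]] :: 'a^3^3) ** Wmat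
          ** (vector [vector [0, 0, a], vector [0, -1, 0], vector [inverse a, 0, 0]]) = Wmat"
  using assms unfolding det_3 Wmat_def
  by (simp_all add: vec_eq_iff forall_3 sum_3 matrix_matrix_mult_def transpose_def)

lemma two_vecs:
  fixes U :: "('a::field^3) set"
  assumes sub: "vec.subspace U" and w1: "w1 \<in> U" and w2: "w2 \<in> U"
    and z1: "w1$2 = 0" and z2: "w2$2 = 0" and D: "w1$1 * w2$3 - w2$1 * w1$3 \<noteq> 0"
  shows "axis 1 1 \<in> U" "axis 3 1 \<in> U"
proof -
  define D where "D = w1$1 * w2$3 - w2$1 * w1$3"
  have Dn: "D \<noteq> 0" using D D_def by simp
  have "(w2$3 / D) *s w1 - (w1$3 / D) *s w2 \<in> U"
    using sub w1 w2 by (intro vec.subspace_diff vec.subspace_scale) auto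
  moreover have "(w2$3 / D) *s w1 - (w1$3 / D) *s w2 = axis 1 1"
    using Dn z1 z2 by (simp add: vec_eq_iff forall_3 axis_def field_simps) (simp add: D_def algebra_simps)
  ultimately show "axis 1 1 \<in> U" by simp
  have "(w1$1 / D) *s w2 - (w2$1 / D) *s w1 \<in> U"
    using sub w1 w2 by (intro vec.subspace_diff vec.subspace_scale) auto
  moreover have "(w1$1 / D) *s w2 - (w2$1 / D) *s w1 = axis 3 1"
    using Dn z1 z2 by (simp add: vec_eq_iff forall_3 axis_def field_simps) (simp add: D_def algebra_simps)
  ultimately show "axis 3 1 \<in> U" by simp
qed

lemma irr_core:
  fixes U :: "('a::field^3) set" and a b c d :: 'a
  assumes sub: "vec.subspace U"
    and iX: "\<And>v. v \<in> U \<Longrightarrow> v v* (vector [vector [- c, b, d], vector [1, 0, c], vector [1, 1, - b]]) \<in> U"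
    and iY: "\<And>v. v \<in> U \<Longrightarrow> v v* (vector [vector [0, 0, a], vector [0, -1, 0], vector [inverse a, 0, 0]]) \<in> U"
    and iZ: "\<And>v. v \<in> U \<Longrightarrow> v v* (vector [vector [0, 0, 1], vector [0, -1, 0], vector [1, 0, 0]]) \<in> U"
    and a0: "a \<noteq> 0" and a2: "a * a \<noteq> 1" and b0: "b \<noteq> 0"
    and u: "u \<in> U" and u0: "u \<noteq> 0"
  shows "U = UNIV"
proof -
  let ?X = "vector [vector [- c, b, d], vector [1, 0, c], vector [1, 1, - b]] :: 'a^3^3"
  let ?Y = "vector [vector [0, 0, a], vector [0, -1, 0], vector [inverse a, 0, 0]] :: 'a^3^3"
  let ?Z = "vector [vector [0, 0, 1], vector [0, -1, 0], vector [1, 0, 0]] :: 'a^3^3"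
  have vm: "\<And>M::'a^3^3. \<And>v. (v v* M) $ 1 = M$1$1 * v$1 + M$2$1 * v$2 + M$3$1 * v$3"
    "\<And>M::'a^3^3. \<And>v. (v v* M) $ 2 = M$1$2 * v$1 + M$2$2 * v$2 + M$3$2 * v$3"
    "\<And>M::'a^3^3. \<And>v. (v v* M) $ 3 = M$1$3 * v$1 + M$2$3 * v$2 + M$3$3 * v$3"
    by (simp_all add: vector_matrix_mult_def sum_3)
  have stepA: "axis 1 1 \<in> U \<and> axis 3 1 \<in> U" if w: "w \<in> U" "w$2 = 0" "w \<noteq> 0" for w
  proof (cases "w$1 * w$1 - w$3 * w$3 = 0")
    case False
    have "w v* ?Z \<in> U" using iZ w by blast
    moreover have "(w v* ?Z)$2 = 0" "(w v* ?Z)$1 = w$3" "(w v* ?Z)$3 = w$1" using w by (simp_all add: vm)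
    ultimately show ?thesis using two_vecs[OF sub w(1), of "w v* ?Z"] False w by auto
  next
    case True
    have x0: "w$1 \<noteq> 0"
    proof
      assume "w$1 = 0"
      then have "w$3 = 0" using True by simp
      then show False using w `w$1 = 0` by (simp add: vec_eq_iff forall_3)
    qed
    have "w v* ?Y \<in> U" using iY w by blast
    moreover have "(w v* ?Y)$2 = 0" "(w v* ?Y)$1 = inverse a * w$3" "(w v* ?Y)$3 = a * w$1" using w by (simp_all add: vm)
    moreover have "w$1 * (a * w$1) - inverse a * w$3 * w$3 \<noteq> 0"
    proof
      assume h: "w$1 * (a * w$1) - inverse a * w$3 * w$3 = 0"
      have "w$3 * w$3 = w$1 * w$1" using True by simp
      then have "w$1 * w$1 * (a - inverse a) = 0" using h by (simp add: algebra_simps)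
      then have "a = inverse a" using x0 by simp
      then have "a * a = 1" using a0 by (metis right_inverse)
      then show False using a2 by simp
    qed
    ultimately show ?thesis using two_vecs[OF sub w(1), of "w v* ?Y"] w by auto
  qed
  have stepC: "\<exists>w. w \<in> U \<and> w$2 = 0 \<and> w \<noteq> 0"
  proof (cases "u$1 + u$3 = 0")
    case False
    have "u + u v* ?Z \<in> U" using iZ u sub vec.subspace_add by blast
    moreover have "(u + u v* ?Z)$2 = 0" "(u + u v* ?Z)$1 = u$1 + u$3" by (simp_all add: vm)
    ultimately show ?thesis using False by (metis zero_index)
  next
    case True
    show ?thesis
    proof (cases "u$1 = 0")
      case False
      have "u v* ?Y - u v* ?Z \<in> U" using iZ iY u sub vec.subspace_diff by blast
      moreover have "(u v* ?Y - u v* ?Z)$2 = 0" "(u v* ?Y - u v* ?Z)$3 = (a - 1) * u$1"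
        by (simp_all add: vm algebra_simps)
      moreover have "a \<noteq> 1" using a2 by auto
      ultimately show ?thesis using False by (metis zero_index mult_eq_0_iff right_minus_eq)
    next
      case z: True
      then have z3: "u$3 = 0" using True by simp
      have u2: "u$2 \<noteq> 0" using u0 z z3 by (simp add: vec_eq_iff forall_3)
      have "u v* ?X \<in> U" using iX u by blast
      moreover have "(u v* ?X)$2 = 0" "(u v* ?X)$1 = u$2" using z z3 by (simp_all add: vm)
      ultimately show ?thesis using u2 by (metis zero_index)
    qed
  qed
  then obtain w where "w \<in> U" "w$2 = 0" "w \<noteq> 0" by blast
  with stepA have e13: "axis 1 1 \<in> U" "axis 3 1 \<in> U" by auto
  have "axis 1 1 v* ?X \<in> U" using iX e13 by blast
  then have "(1 / b) *s (axis 1 1 v* ?X + c *s axis 1 1 - d *s axis 3 1) \<in> U"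
    using e13 sub by (intro vec.subspace_scale vec.subspace_add vec.subspace_diff) auto
  moreover have "(1 / b) *s (axis 1 1 v* ?X + c *s axis 1 1 - d *s axis 3 1) = axis 2 1"
    using b0 by (simp add: vec_eq_iff forall_3 vm axis_def)
  ultimately have e2: "axis 2 1 \<in> U" by simp
  have "v \<in> U" for v :: "'a^3"
  proof -
    have "v$1 *s axis 1 1 + v$2 *s axis 2 1 + v$3 *s axis 3 1 \<in> U"
      using e13 e2 sub by (intro vec.subspace_scale vec.subspace_add) auto
    moreover have "v$1 *s axis 1 1 + v$2 *s axis 2 1 + v$3 *s axis 3 1 = v"
      by (simp add: vec_eq_iff forall_3 axis_def)
    ultimately show "v \<in> U" by simp
  qed
  then show ?thesis by auto
qed

theorem lemma2p5:
  fixes a b :: "'a::{field,finite}" and p f q :: nat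
  assumes "prime p" and "odd p" and "q = p ^ f" and "q \<ge> 5"
    and "CARD('a) = q ^ 2"
    and "b \<noteq> 0" and "b + b ^ q = 1" and "b \<noteq> b ^ q"
    and "a \<noteq> 0" and "elem_order a = q - 1"
    and "\<forall>i \<in> {0, f div gcd 3 f, 2 * f div gcd 3 f}.
           (a + inverse a + 1) ^ (p ^ i) \<noteq> a + inverse a * b ^ (q + 1)"
    and "\<forall>i \<in> {0, f div gcd 3 f, 2 * f div gcd 3 f}.
           (a + inverse a + 1) ^ (p ^ i) \<noteq> 1 + b ^ (q + 1)"
    and "a + inverse a * b ^ (q + 1) \<noteq> 1 + b ^ (q + 1)"
  shows "gen_group {vector [vector [- (b ^ q), b, b ^ (q + 1)], vector [1, 0, b ^ q], vector [1, 1, - b]],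
                    vector [vector [0, 0, a], vector [0, -1, 0], vector [inverse a, 0, 0]],
                    vector [vector [0, 0, 1], vector [0, -1, 0], vector [1, 0, 0]]} \<subseteq> SU3 q
       \<and> irreducible3 (gen_group {vector [vector [- (b ^ q), b, b ^ (q + 1)], vector [1, 0, b ^ q], vector [1, 1, - b]],
                    vector [vector [0, 0, a], vector [0, -1, 0], vector [inverse a, 0, 0]],
                    vector [vector [0, 0, 1], vector [0, -1, 0], vector [1, 0, 0]]})"
proof -
  let ?X = "vector [vector [- (b ^ q), b, b ^ (q + 1)], vector [1, 0, b ^ q], vector [1, 1, - b]] :: 'a^3^3"
  let ?Y = "vector [vector [0, 0, a], vector [0, -1, 0], vector [inverse a, 0, 0]] :: 'a^3^3"
  let ?Z = "vector [vector [0, 0, 1], vector [0, -1, 0], vector [1, 0, 0]] :: 'a^3^3"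
  let ?G = "gen_group {?X, ?Y, ?Z}"
  define c where "c = b ^ q"
  have q0: "q > 0" using assms(4) by simp
  have oq: "odd q" using assms(2,3) by simp
  have fs: "(x + y) ^ q = x ^ q + y ^ q" for x y :: 'a
    unfolding assms(3) by (rule frob_add[OF assms(1)]) (use assms(3,5) in simp)
  have pc: "x ^ (q * q) = x" for x :: 'a
  proof -
    have "x ^ CARD('a) = x" by (rule pow_card_same)
    then show ?thesis using assms(5) by (simp add: power2_eq_square)
  qed
  have bc: "b + c = 1" using assms(7) c_def by simp
  have cq: "c ^ q = b" using pc unfolding c_def by (simp add: power_mult[symmetric])
  have bq: "b ^ q = c" using c_def by simp
  have bq1: "b ^ (q + 1) = b * c" by (simp add: c_def mult.commute)
  have q1: "1 < q" using assms(4) by simp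
  have "q \<le> q * q" by (rule le_square)
  then have "1 < q * q" using q1 by linarith
  then have card_gt: "CARD('a) > 1" using assms(5) by (simp add: power2_eq_square)
  obtain n where n: "CARD('a) = Suc n" using card_gt by (cases "CARD('a)") auto
  have ex: "\<exists>n. 0 < n \<and> a ^ n = 1"
  proof (intro exI conjI)
    show "0 < n" using card_gt n by simp
    have "a * a ^ n = a * 1" using pow_card_same[of a] n by simp
    then show "a ^ n = 1" using assms(9) by simp
  qed
  have aord: "a ^ (q - 1) = 1"
    using LeastI_ex[OF ex] assms(10) unfolding elem_order_def by simp
  obtain m where m: "q = Suc m" using q0 by (cases q) auto
  have aq: "a ^ q = a"
    using aord m by (simp add: mult.commute)
  have a2: "a * a \<noteq> 1"
  proof
    assume "a * a = 1"
    then have "0 < (2::nat) \<and> a ^ 2 = 1" by (simp add: power2_eq_square)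
    then have "elem_order a \<le> 2" unfolding elem_order_def by (rule Least_le)
    then show False using assms(4,10) by simp
  qed
  have aiq: "inverse a ^ q = inverse a" using aq by (simp add: power_inverse)
  have XS: "?X \<in> SU3 q"
  proof (rule SU3_vecI)
    show "det ?X = 1" unfolding bq bq1 using X_unit(1)[OF bc] .
    show "frobm q ?X = vector [vector [- b, c, c * b], vector [1, 0, b], vector [1, 1, - c]]"
      unfolding frobm_vec bq bq1 using q0 oq cq bq by (simp add: power_mult_distrib zero_power mult.commute)
    show "transpose (vector [vector [- b, c, c * b], vector [1, 0, b], vector [1, 1, - c]]) ** Wmat ** ?X = Wmat"
      unfolding bq bq1 using X_unit(2)[OF bc] .
  qed
  have YS: "?Y \<in> SU3 q"
  proof (rule SU3_vecI)
    show "det ?Y = 1" using Y_unit(1)[OF assms(9)] .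
    show "frobm q ?Y = ?Y" unfolding frobm_vec using q0 oq aq aiq by (simp add: zero_power)
    show "transpose ?Y ** Wmat ** ?Y = Wmat" using Y_unit(2)[OF assms(9)] .
  qed
  have ZS: "?Z \<in> SU3 q"
  proof (rule SU3_vecI)
    show "det ?Z = 1" using Y_unit(1)[of "1::'a"] by simp
    show "frobm q ?Z = ?Z" unfolding frobm_vec using q0 oq by (simp add: zero_power)
    show "transpose ?Z ** Wmat ** ?Z = Wmat" using Y_unit(2)[of "1::'a"] by simp
  qed
  have IS: "mat 1 \<in> SU3 q"
    by (simp add: SU3_def frobm_one[OF q0] transpose_mat matrix_mul_lid matrix_mul_rid)
  have sub: "?G \<subseteq> SU3 q"
  proof
    fix g assume "g \<in> ?G"
    then show "g \<in> SU3 q"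
    proof (induct rule: gen_group.induct)
      case one then show ?case using IS .
    next
      case (gen g) then show ?case using XS YS ZS by blast
    next
      case (mult g h) then show ?case using SU3_mult[OF fs] by blast
    next
      case (inv g) then show ?case using SU3_inv[OF fs q0] by blast
    qed
  qed
  have irr: "irreducible3 ?G"
    unfolding irreducible3_def
  proof (intro allI impI notI)
    fix U :: "('a^3) set"
    assume h1: "vec.subspace U \<and> vec.dim U \<in> {1, 2}"
      and h2: "\<forall>g\<in>?G. \<forall>v\<in>U. v v* g \<in> U"
    have gX: "?X \<in> ?G" and gY: "?Y \<in> ?G" and gZ: "?Z \<in> ?G"
      by (auto intro: gen_group.gen)
    have su: "vec.subspace U" using h1 by simp
    obtain u where u: "u \<in> U" "u \<noteq> 0"
    proof -
      have "\<not> U \<subseteq> {0}"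
      proof
        assume "U \<subseteq> {0}"
        then have "U = {0}" using vec.subspace_0[OF su] by blast
        then show False using h1 by simp
      qed
      then show ?thesis using that by blast
    qed
    have "U = UNIV"
      by (rule irr_core[where c = "b ^ q" and d = "b ^ (q + 1)" and a = a and b = b, OF su _ _ _ assms(9) a2 assms(6) u])
         (use h2 gX gY gZ in blast)+
    then have "vec.dim U = 3" by (simp add: card_cart_basis)
    then show False using h1 by simp
  qed
  show ?thesis using sub irr by blast
qed

end
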